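(* Let $\Omega\subset\mathbb R^3$ be a bounded domain containing the origin and $k\ge0$ an integer. The sequence $$0\to\mathbb P_{k-2}(\Omega) \xrightarrow{q\mapsto q\boldsymbol x\boldsymbol x^{\intercal}} \mathbb P_k(\Omega; \mathbb S) \xrightarrow{\boldsymbol\tau\mapsto\boldsymbol\tau\times\boldsymbol x} \mathbb P_{k+1}(\Omega; \mathbb T)\xrightarrow{\boldsymbol\tau\mapsto\boldsymbol\tau\boldsymbol x} \mathbb P_{k+2}(\Omega; \mathbb R^3)\xrightarrow{\boldsymbol \pi_{RT}}\boldsymbol{RT}\to0$$ is well defined (in particular $\boldsymbol\tau\times\boldsymbol x$ is trace-free for symmetric $\boldsymbol\tau$) and is an exact complex.
   Context: $\mathbb S,\mathbb T$: real symmetric, resp. trace-free, $3\times3$ matrices; $\mathbb P_m(\Omega;X)$: $X$-valued polynomials of total degree $\le m$ ($\{0\}$ if $m<0$). $\boldsymbol x=(x_1,x_2,x_3)^{\intercal}$ is the position vector. For a matrix $\boldsymbol\tau$, $\boldsymbol\tau\times\boldsymbol x$ is the matrix whose $i$-th row is (row $i$ of $\boldsymbol\tau$)$\times\boldsymbol x$. $\boldsymbol{RT}=\{a\boldsymbol x+\boldsymbol b:a\in\mathbb R,\boldsymbol b\in\mathbb R^3\}$ and $\boldsymbol\pi_{RT}\boldsymbol v:=\boldsymbol v(0,0,0)+\frac13(\operatorname{div}\boldsymbol v)(0,0,0)\boldsymbol x$. *)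

theory Defs
  imports "HOL-Analysis.Analysis" "HOL-Analysis.Cross3"
begin

text \<open>Real polynomials in three variables of total degree at most m (m an integer;
  for m < 0 only the zero polynomial), as functions on R^3.\<close>
definition poly_deg :: "int \<Rightarrow> (real^3 \<Rightarrow> real) \<Rightarrow> bool" where
  "poly_deg m p \<longleftrightarrow> (\<exists>c :: nat \<Rightarrow> nat \<Rightarrow> nat \<Rightarrow> real. \<forall>x.
     p x = (\<Sum>a\<le>nat m. \<Sum>b\<le>nat m. \<Sum>d\<le>nat m.
              if int (a + b + d) \<le> m
              then c a b d * (x$1)^a * (x$2)^b * (x$3)^d else 0))"

definition poly_on :: "(real^3) set \<Rightarrow> int \<Rightarrow> (real^3 \<Rightarrow> real) \<Rightarrow> bool" where
  "poly_on \<Omega> m f \<longleftrightarrow> (\<exists>p. poly_deg m p \<and> (\<forall>x\<in>\<Omega>. f x = p x))"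

definition P_scal :: "(real^3) set \<Rightarrow> int \<Rightarrow> (real^3 \<Rightarrow> real) set" where
  "P_scal \<Omega> m = {q. poly_on \<Omega> m q}"

definition P_vec :: "(real^3) set \<Rightarrow> int \<Rightarrow> (real^3 \<Rightarrow> real^3) set" where
  "P_vec \<Omega> m = {v. \<forall>i. poly_on \<Omega> m (\<lambda>x. v x $ i)}"

definition P_mat :: "(real^3) set \<Rightarrow> int \<Rightarrow> (real^3 \<Rightarrow> real^3^3) set" where
  "P_mat \<Omega> m = {\<tau>. \<forall>i j. poly_on \<Omega> m (\<lambda>x. \<tau> x $ i $ j)}"

definition P_sym :: "(real^3) set \<Rightarrow> int \<Rightarrow> (real^3 \<Rightarrow> real^3^3) set" where
  "P_sym \<Omega> m = {\<tau> \<in> P_mat \<Omega> m. \<forall>x\<in>\<Omega>. transpose (\<tau> x) = \<tau> x}"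

definition P_tf :: "(real^3) set \<Rightarrow> int \<Rightarrow> (real^3 \<Rightarrow> real^3^3) set" where
  "P_tf \<Omega> m = {\<tau> \<in> P_mat \<Omega> m. \<forall>x\<in>\<Omega>. trace (\<tau> x) = 0}"

definition map_xxT :: "(real^3 \<Rightarrow> real) \<Rightarrow> real^3 \<Rightarrow> real^3^3" where
  "map_xxT q = (\<lambda>x. q x *\<^sub>R (\<chi> i j. x$i * x$j))"

definition map_cross :: "(real^3 \<Rightarrow> real^3^3) \<Rightarrow> real^3 \<Rightarrow> real^3^3" where
  "map_cross \<tau> = (\<lambda>x. \<chi> i. cross3 (\<tau> x $ i) x)"

definition map_x :: "(real^3 \<Rightarrow> real^3^3) \<Rightarrow> real^3 \<Rightarrow> real^3" where
  "map_x \<tau> = (\<lambda>x. \<tau> x *v x)"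

definition div_at :: "(real^3 \<Rightarrow> real^3) \<Rightarrow> real^3 \<Rightarrow> real" where
  "div_at v p = (\<Sum>i\<in>UNIV. frechet_derivative v (at p) (axis i 1) $ i)"

definition pi_RT :: "(real^3 \<Rightarrow> real^3) \<Rightarrow> real^3 \<Rightarrow> real^3" where
  "pi_RT v = (\<lambda>x. v 0 + ((1/3) * div_at v 0) *\<^sub>R x)"

definition RT :: "(real^3 \<Rightarrow> real^3) set" where
  "RT = {f. \<exists>(a::real) b. f = (\<lambda>x. a *\<^sub>R x + b)}"

end

theory Submission
  imports Defs "HOL-Computational_Algebra.Polynomial"
begin

lemma if3: "(if a' = a \<and> b' = b \<and> d' = d then F else (0::real)) = (if a' = a then if b' = b then if d' = d then F else 0 else 0 else 0)"
  by simp
lemma sum_ifc: "(\<Sum>x\<in>A. if P then f x else (0::real)) = (if P then (\<Sum>x\<in>A. f x) else 0)"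
  by simp
lemma sum3_delta:
  fixes f :: "nat \<Rightarrow> nat \<Rightarrow> nat \<Rightarrow> real"
  assumes "a \<le> N" "b \<le> N" "d \<le> N"
  shows "(\<Sum>a'\<le>N. \<Sum>b'\<le>N. \<Sum>d'\<le>N. if a' = a \<and> b' = b \<and> d' = d then f a' b' d' else 0) = f a b d"
  using assms by (simp only: if3 sum_ifc sum.delta finite_atMost atMost_iff if_True)

lemma if_mult0: "(if P then a else 0) * b = (if P then a*b else (0::real))" by simp

lemma pd_zero: "poly_deg m (\<lambda>x. 0)"
  unfolding poly_deg_def by (rule exI[of _ "\<lambda>_ _ _. 0::real"]) (simp cong: if_cong)

lemma pd_add:
  assumes "poly_deg m p" "poly_deg m q"
  shows "poly_deg m (\<lambda>x. p x + q x)"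
proof -
  obtain c where c: "\<And>x. p x = (\<Sum>a\<le>nat m. \<Sum>b\<le>nat m. \<Sum>d\<le>nat m.
              if int (a + b + d) \<le> m then c a b d * (x$1)^a * (x$2)^b * (x$3)^d else 0)"
    using assms(1) unfolding poly_deg_def by blast
  obtain e where e: "\<And>x. q x = (\<Sum>a\<le>nat m. \<Sum>b\<le>nat m. \<Sum>d\<le>nat m.
              if int (a + b + d) \<le> m then e a b d * (x$1)^a * (x$2)^b * (x$3)^d else 0)"
    using assms(2) unfolding poly_deg_def by blast
  show ?thesis unfolding poly_deg_def
  proof (rule exI[of _ "\<lambda>a b d. c a b d + e a b d"], intro allI)
    fix x :: "real^3"
    show "p x + q x = (\<Sum>a\<le>nat m. \<Sum>b\<le>nat m. \<Sum>d\<le>nat m.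
              if int (a + b + d) \<le> m then (c a b d + e a b d) * (x$1)^a * (x$2)^b * (x$3)^d else 0)"
      unfolding c e sum.distrib[symmetric] by (intro sum.cong refl) (simp add: algebra_simps)
  qed
qed

lemma pd_scale:
  assumes "poly_deg m p"
  shows "poly_deg m (\<lambda>x. r * p x)"
proof -
  obtain c where c: "\<And>x. p x = (\<Sum>a\<le>nat m. \<Sum>b\<le>nat m. \<Sum>d\<le>nat m.
              if int (a + b + d) \<le> m then c a b d * (x$1)^a * (x$2)^b * (x$3)^d else 0)"
    using assms(1) unfolding poly_deg_def by blast
  show ?thesis unfolding poly_deg_def
  proof (rule exI[of _ "\<lambda>a b d. r * c a b d"], intro allI)
    fix x :: "real^3"
    show "r * p x = (\<Sum>a\<le>nat m. \<Sum>b\<le>nat m. \<Sum>d\<le>nat m.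
              if int (a + b + d) \<le> m then (r * c a b d) * (x$1)^a * (x$2)^b * (x$3)^d else 0)"
      unfolding c sum_distrib_left by (intro sum.cong refl) (simp add: algebra_simps)
  qed
qed

lemma pd_neg: "poly_deg m p \<Longrightarrow> poly_deg m (\<lambda>x. - p x)"
  using pd_scale[of m p "-1"] by simp

lemma pd_diff: "poly_deg m p \<Longrightarrow> poly_deg m q \<Longrightarrow> poly_deg m (\<lambda>x. p x - q x)"
  using pd_add[of m p "\<lambda>x. - q x"] pd_neg[of m q] by simp

lemma pd_sum:
  assumes "finite A" "\<And>i. i \<in> A \<Longrightarrow> poly_deg m (f i)"
  shows "poly_deg m (\<lambda>x. \<Sum>i\<in>A. f i x)"
  using assms by (induction A rule: finite_induct) (auto intro: pd_zero pd_add)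

lemma pd_cmono:
  assumes "int a + int b + int d \<le> m"
  shows "poly_deg m (\<lambda>x. r * (x$1)^a * (x$2)^b * (x$3)^d)"
proof -
  have ab: "a \<le> nat m" "b \<le> nat m" "d \<le> nat m" using assms by auto
  show ?thesis unfolding poly_deg_def
  proof (rule exI[of _ "\<lambda>a' b' d'. if a' = a \<and> b' = b \<and> d' = d then r else 0"], intro allI)
    fix x :: "real^3"
    have "(\<Sum>a'\<le>nat m. \<Sum>b'\<le>nat m. \<Sum>d'\<le>nat m.
              if int (a' + b' + d') \<le> m then (if a' = a \<and> b' = b \<and> d' = d then r else 0) * (x$1)^a' * (x$2)^b' * (x$3)^d' else 0)
        = (\<Sum>a'\<le>nat m. \<Sum>b'\<le>nat m. \<Sum>d'\<le>nat m.
              if a' = a \<and> b' = b \<and> d' = d then r * (x$1)^a' * (x$2)^b' * (x$3)^d' else 0)"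
      by (intro sum.cong refl) (use assms in auto)
    also have "\<dots> = r * (x$1)^a * (x$2)^b * (x$3)^d" using ab by (rule sum3_delta)
    finally show "r * (x$1)^a * (x$2)^b * (x$3)^d = (\<Sum>a'\<le>nat m. \<Sum>b'\<le>nat m. \<Sum>d'\<le>nat m.
              if int (a' + b' + d') \<le> m then (if a' = a \<and> b' = b \<and> d' = d then r else 0) * (x$1)^a' * (x$2)^b' * (x$3)^d' else 0)" by simp
  qed
qed

lemma pd_if: "(P \<Longrightarrow> poly_deg n f) \<Longrightarrow> poly_deg n (\<lambda>x. if P then f x else 0)"
  by (cases P) (auto intro: pd_zero)

lemma pd_term:
  assumes "\<And>a b d. int a + int b + int d \<le> m \<Longrightarrow> poly_deg n (\<lambda>x. c a b d * (x$1)^a * (x$2)^b * (x$3)^d * g x)"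
  shows "poly_deg n (\<lambda>x. \<Sum>a\<le>nat m. \<Sum>b\<le>nat m. \<Sum>d\<le>nat m.
              if int (a + b + d) \<le> m then c a b d * (x$1)^a * (x$2)^b * (x$3)^d * g x else 0)"
  by (intro pd_sum finite_atMost pd_if assms) simp

lemma pd_mono:
  assumes "poly_deg m p" "m \<le> m'"
  shows "poly_deg m' p"
proof -
  obtain c where c: "\<And>x. p x = (\<Sum>a\<le>nat m. \<Sum>b\<le>nat m. \<Sum>d\<le>nat m.
              if int (a + b + d) \<le> m then c a b d * (x$1)^a * (x$2)^b * (x$3)^d else 0)"
    using assms(1) unfolding poly_deg_def by blast
  have "poly_deg m' (\<lambda>x. \<Sum>a\<le>nat m. \<Sum>b\<le>nat m. \<Sum>d\<le>nat m.
              if int (a + b + d) \<le> m then c a b d * (x$1)^a * (x$2)^b * (x$3)^d * 1 else 0)"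
  proof (rule pd_term)
    fix a b d assume "int a + int b + int d \<le> m"
    then show "poly_deg m' (\<lambda>x. c a b d * (x$1)^a * (x$2)^b * (x$3)^d * 1)"
      using pd_cmono[of a b d m' "c a b d"] assms(2) by simp
  qed
  moreover have "(\<lambda>x. \<Sum>a\<le>nat m. \<Sum>b\<le>nat m. \<Sum>d\<le>nat m.
              if int (a + b + d) \<le> m then c a b d * (x$1)^a * (x$2)^b * (x$3)^d * 1 else 0) = p"
    by (rule ext) (simp add: c cong: if_cong)
  ultimately show ?thesis by simp
qed

lemma pd_monom_mult:
  assumes "int a + int b + int d \<le> m" "poly_deg n q"
  shows "poly_deg (m + n) (\<lambda>x. r * (x$1)^a * (x$2)^b * (x$3)^d * q x)"
proof -
  obtain e where e: "\<And>x. q x = (\<Sum>a\<le>nat n. \<Sum>b\<le>nat n. \<Sum>d\<le>nat n.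
              if int (a + b + d) \<le> n then e a b d * (x$1)^a * (x$2)^b * (x$3)^d else 0)"
    using assms(2) unfolding poly_deg_def by blast
  have "poly_deg (m+n) (\<lambda>x. \<Sum>a'\<le>nat n. \<Sum>b'\<le>nat n. \<Sum>d'\<le>nat n.
              if int (a' + b' + d') \<le> n then e a' b' d' * (x$1)^a' * (x$2)^b' * (x$3)^d' * (r * (x$1)^a * (x$2)^b * (x$3)^d) else 0)"
  proof (rule pd_term)
    fix a' b' d' assume "int a' + int b' + int d' \<le> n"
    then have "poly_deg (m+n) (\<lambda>x. (e a' b' d' * r) * (x$1)^(a'+a) * (x$2)^(b'+b) * (x$3)^(d'+d))"
      using assms(1) by (intro pd_cmono) simp
    then show "poly_deg (m+n) (\<lambda>x. e a' b' d' * (x$1)^a' * (x$2)^b' * (x$3)^d' * (r * (x$1)^a * (x$2)^b * (x$3)^d))"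
      by (simp add: power_add algebra_simps)
  qed
  then show ?thesis
    by (simp add: e sum_distrib_left sum_distrib_right algebra_simps if_distrib cong: if_cong)
qed

lemma pd_mult:
  assumes "poly_deg m p" "poly_deg n q"
  shows "poly_deg (m + n) (\<lambda>x. p x * q x)"
proof -
  obtain c where c: "\<And>x. p x = (\<Sum>a\<le>nat m. \<Sum>b\<le>nat m. \<Sum>d\<le>nat m.
              if int (a + b + d) \<le> m then c a b d * (x$1)^a * (x$2)^b * (x$3)^d else 0)"
    using assms(1) unfolding poly_deg_def by blast
  have "poly_deg (m+n) (\<lambda>x. \<Sum>a\<le>nat m. \<Sum>b\<le>nat m. \<Sum>d\<le>nat m.
              if int (a + b + d) \<le> m then c a b d * (x$1)^a * (x$2)^b * (x$3)^d * q x else 0)"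
    by (rule pd_term) (rule pd_monom_mult, assumption, rule assms(2))
  moreover have "(\<lambda>x. \<Sum>a\<le>nat m. \<Sum>b\<le>nat m. \<Sum>d\<le>nat m.
              if int (a + b + d) \<le> m then c a b d * (x$1)^a * (x$2)^b * (x$3)^d * q x else 0) = (\<lambda>x. p x * q x)"
    by (rule ext) (simp only: c sum_distrib_right if_mult0)
  ultimately show ?thesis by simp
qed

lemma pd_const: "0 \<le> m \<Longrightarrow> poly_deg m (\<lambda>x. r)"
  using pd_cmono[of 0 0 0 m r] by simp

lemma pd_coord: "1 \<le> m \<Longrightarrow> poly_deg m (\<lambda>x. x$i)"
proof -
  assume m: "1 \<le> m"
  have "i = 1 \<or> i = 2 \<or> i = 3" using exhaust_3 by blast
  then show ?thesis
    using pd_cmono[of 1 0 0 m 1] pd_cmono[of 0 1 0 m 1] pd_cmono[of 0 0 1 m 1] m by auto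
qed

lemma pd_cmult: "poly_deg m p \<Longrightarrow> poly_deg (m + 1) (\<lambda>x. x$i * p x)"
  using pd_mult[OF pd_coord[of 1 i] , of m p] by (simp add: add.commute)


lemma cont_if: "(P \<Longrightarrow> continuous_on S f) \<Longrightarrow> continuous_on S (\<lambda>x. if P then f x else (0::real))"
  by (cases P) auto
lemma diff_if: "(P \<Longrightarrow> f differentiable F) \<Longrightarrow> (\<lambda>x. if P then f x else (0::real)) differentiable F"
  by (cases P) auto

lemma pd_continuous:
  assumes "poly_deg m p" shows "continuous_on UNIV p"
proof -
  obtain c where c: "\<And>x. p x = (\<Sum>a\<le>nat m. \<Sum>b\<le>nat m. \<Sum>d\<le>nat m.
              if int (a + b + d) \<le> m then c a b d * (x$1)^a * (x$2)^b * (x$3)^d else 0)"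
    using assms(1) unfolding poly_deg_def by blast
  have "continuous_on UNIV (\<lambda>x::real^3. \<Sum>a\<le>nat m. \<Sum>b\<le>nat m. \<Sum>d\<le>nat m.
              if int (a + b + d) \<le> m then c a b d * (x$1)^a * (x$2)^b * (x$3)^d else 0)"
    by (intro continuous_intros cont_if)
  moreover have "(\<lambda>x::real^3. \<Sum>a\<le>nat m. \<Sum>b\<le>nat m. \<Sum>d\<le>nat m.
              if int (a + b + d) \<le> m then c a b d * (x$1)^a * (x$2)^b * (x$3)^d else 0) = p"
    by (rule ext) (simp add: c)
  ultimately show ?thesis by (simp only:)
qed

lemma pd_differentiable:
  assumes "poly_deg m p" shows "p differentiable (at x)"
proof -
  obtain c where c: "\<And>x. p x = (\<Sum>a\<le>nat m. \<Sum>b\<le>nat m. \<Sum>d\<le>nat m.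
              if int (a + b + d) \<le> m then c a b d * (x$1)^a * (x$2)^b * (x$3)^d else 0)"
    using assms(1) unfolding poly_deg_def by blast
  have comp: "(\<lambda>x::real^3. x$i) differentiable (at x)" for i
    by (rule bounded_linear_imp_differentiable) (rule bounded_linear_vec_nth)
  have "(\<lambda>x::real^3. \<Sum>a\<le>nat m. \<Sum>b\<le>nat m. \<Sum>d\<le>nat m.
              if int (a + b + d) \<le> m then c a b d * (x$1)^a * (x$2)^b * (x$3)^d else 0) differentiable (at x)"
    by (intro differentiable_sum finite_atMost ballI diff_if) (auto intro!: differentiable_mult differentiable_power comp)
  moreover have "(\<lambda>x::real^3. \<Sum>a\<le>nat m. \<Sum>b\<le>nat m. \<Sum>d\<le>nat m.
              if int (a + b + d) \<le> m then c a b d * (x$1)^a * (x$2)^b * (x$3)^d else 0) = p"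
    by (rule ext) (simp add: c)
  ultimately show ?thesis by (simp only:)
qed

lemma zero_by_cont:
  fixes f :: "real^3 \<Rightarrow> real"
  assumes "continuous_on UNIV f"
    and "\<And>y. y$j \<noteq> 0 \<Longrightarrow> (\<forall>l. l \<noteq> j \<longrightarrow> y$l = x$l) \<Longrightarrow> f y = 0"
  shows "f x = 0"
proof (cases "x$j = 0")
  case False then show ?thesis using assms(2)[of x] by auto
next
  case True
  have ic: "isCont f y" for y using assms(1) by (simp add: continuous_on_eq_continuous_at)
  have "((\<lambda>t. x + t *\<^sub>R axis j 1) \<longlongrightarrow> x + 0 *\<^sub>R axis j 1) (at_right (0::real))"
    by (intro tendsto_intros)
  then have lim: "((\<lambda>t. f (x + t *\<^sub>R axis j 1)) \<longlongrightarrow> f x) (at_right (0::real))"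
    using isCont_tendsto_compose[OF ic] by simp
  have "\<forall>\<^sub>F t in at_right (0::real). 0 < t" by (rule eventually_at_right_less)
  then have "\<forall>\<^sub>F t in at_right (0::real). f (x + t *\<^sub>R axis j 1) = 0"
  proof (rule eventually_mono)
    fix t :: real assume t: "0 < t"
    show "f (x + t *\<^sub>R axis j 1) = 0"
      by (rule assms(2)) (use t True in \<open>auto simp: axis_def\<close>)
  qed
  then have "((\<lambda>t. 0) \<longlongrightarrow> f x) (at_right (0::real))"
    using lim by (rule Lim_transform_eventually[rotated]) 
  then show ?thesis using tendsto_const tendsto_unique trivial_limit_at_right_real by metis
qed

definition upd :: "3 \<Rightarrow> real^3 \<Rightarrow> real^3" where
  "upd i x = (\<chi> j. if j = i then 0 else x$j)"

lemma upd_nth[simp]: "upd i x $ j = (if j = i then 0 else x$j)"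
  by (simp add: upd_def)

lemma pd_upd:
  assumes "poly_deg m p" shows "poly_deg m (\<lambda>x. p (upd i x))"
proof -
  obtain c where c: "\<And>x. p x = (\<Sum>a\<le>nat m. \<Sum>b\<le>nat m. \<Sum>d\<le>nat m.
              if int (a + b + d) \<le> m then c a b d * (x$1)^a * (x$2)^b * (x$3)^d else 0)"
    using assms(1) unfolding poly_deg_def by blast
  have "poly_deg m (\<lambda>x. \<Sum>a\<le>nat m. \<Sum>b\<le>nat m. \<Sum>d\<le>nat m.
              if int (a + b + d) \<le> m then c a b d * (upd i x$1)^a * (upd i x$2)^b * (upd i x$3)^d else 0)"
  proof (intro pd_sum finite_atMost pd_if)
    fix a b d assume h: "int (a + b + d) \<le> m"
    have "i = 1 \<or> i = 2 \<or> i = 3" using exhaust_3 by blast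
    then show "poly_deg m (\<lambda>x. c a b d * (upd i x$1)^a * (upd i x$2)^b * (upd i x$3)^d)"
    proof (elim disjE)
      assume i: "i = 1"
      show ?thesis using pd_cmono[of 0 b d m "c a b d * 0^a"] h i by (simp add: mult.assoc)
    next
      assume i: "i = 2"
      show ?thesis using pd_cmono[of a 0 d m "c a b d * 0^b"] h i by (simp add: ac_simps)
    next
      assume i: "i = 3"
      show ?thesis using pd_cmono[of a b 0 m "c a b d * 0^d"] h i by (simp add: ac_simps)
    qed
  qed
  then show ?thesis by (simp add: c)
qed


lemma pd_decomp1:
  assumes "poly_deg m p"
  shows "\<exists>q. poly_deg (m-1) q \<and> (\<forall>x. p x = p (upd 1 x) + x$1 * q x)"
proof -
  obtain c where c: "\<And>x. p x = (\<Sum>a\<le>nat m. \<Sum>b\<le>nat m. \<Sum>d\<le>nat m.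
              if int (a + b + d) \<le> m then c a b d * (x$1)^a * (x$2)^b * (x$3)^d else 0)"
    using assms(1) unfolding poly_deg_def by blast
  define q where "q x = (\<Sum>a\<le>nat m. \<Sum>b\<le>nat m. \<Sum>d\<le>nat m.
              if int (a + b + d) \<le> m \<and> 0 < a then c a b d * (x$1)^(a-1) * (x$2)^b * (x$3)^d else 0)" for x :: "real^3"
  have "poly_deg (m-1) q" unfolding q_def
  proof (intro pd_sum finite_atMost pd_if)
    fix a b d assume "int (a + b + d) \<le> m \<and> 0 < a"
    then show "poly_deg (m-1) (\<lambda>x. c a b d * (x$1)^(a-1) * (x$2)^b * (x$3)^d)"
      by (intro pd_cmono) auto
  qed
  moreover have "p x = p (upd 1 x) + x$1 * q x" for x
    unfolding c q_def sum_distrib_left sum.distrib[symmetric]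
    apply (intro sum.cong refl)
    subgoal for a b d by (cases a) (simp_all add: algebra_simps)
    done
  ultimately show ?thesis by blast
qed

lemma pd_decomp2:
  assumes "poly_deg m p"
  shows "\<exists>q. poly_deg (m-1) q \<and> (\<forall>x. p x = p (upd 2 x) + x$2 * q x)"
proof -
  obtain c where c: "\<And>x. p x = (\<Sum>a\<le>nat m. \<Sum>b\<le>nat m. \<Sum>d\<le>nat m.
              if int (a + b + d) \<le> m then c a b d * (x$1)^a * (x$2)^b * (x$3)^d else 0)"
    using assms(1) unfolding poly_deg_def by blast
  define q where "q x = (\<Sum>a\<le>nat m. \<Sum>b\<le>nat m. \<Sum>d\<le>nat m.
              if int (a + b + d) \<le> m \<and> 0 < b then c a b d * (x$1)^a * (x$2)^(b-1) * (x$3)^d else 0)" for x :: "real^3"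
  have "poly_deg (m-1) q" unfolding q_def
  proof (intro pd_sum finite_atMost pd_if)
    fix a b d assume "int (a + b + d) \<le> m \<and> 0 < b"
    then show "poly_deg (m-1) (\<lambda>x. c a b d * (x$1)^a * (x$2)^(b-1) * (x$3)^d)"
      by (intro pd_cmono) auto
  qed
  moreover have "p x = p (upd 2 x) + x$2 * q x" for x
    unfolding c q_def sum_distrib_left sum.distrib[symmetric]
    apply (intro sum.cong refl)
    subgoal for a b d by (cases b) (simp_all add: algebra_simps)
    done
  ultimately show ?thesis by blast
qed

lemma pd_decomp3:
  assumes "poly_deg m p"
  shows "\<exists>q. poly_deg (m-1) q \<and> (\<forall>x. p x = p (upd 3 x) + x$3 * q x)"
proof -
  obtain c where c: "\<And>x. p x = (\<Sum>a\<le>nat m. \<Sum>b\<le>nat m. \<Sum>d\<le>nat m.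
              if int (a + b + d) \<le> m then c a b d * (x$1)^a * (x$2)^b * (x$3)^d else 0)"
    using assms(1) unfolding poly_deg_def by blast
  define q where "q x = (\<Sum>a\<le>nat m. \<Sum>b\<le>nat m. \<Sum>d\<le>nat m.
              if int (a + b + d) \<le> m \<and> 0 < d then c a b d * (x$1)^a * (x$2)^b * (x$3)^(d-1) else 0)" for x :: "real^3"
  have "poly_deg (m-1) q" unfolding q_def
  proof (intro pd_sum finite_atMost pd_if)
    fix a b d assume "int (a + b + d) \<le> m \<and> 0 < d"
    then show "poly_deg (m-1) (\<lambda>x. c a b d * (x$1)^a * (x$2)^b * (x$3)^(d-1))"
      by (intro pd_cmono) auto
  qed
  moreover have "p x = p (upd 3 x) + x$3 * q x" for x
    unfolding c q_def sum_distrib_left sum.distrib[symmetric]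
    apply (intro sum.cong refl)
    subgoal for a b d by (cases d) (simp_all add: algebra_simps)
    done
  ultimately show ?thesis by blast
qed

lemma pd_decomp:
  assumes "poly_deg m p"
  shows "\<exists>q. poly_deg (m-1) q \<and> (\<forall>x. p x = p (upd i x) + x$i * q x)"
proof -
  have "i = 1 \<or> i = 2 \<or> i = 3" by (rule exhaust_3)
  then show ?thesis
  proof (elim disjE)
    assume "i = 1" then show ?thesis using pd_decomp1[OF assms] by simp
  next
    assume "i = 2" then show ?thesis using pd_decomp2[OF assms] by simp
  next
    assume "i = 3" then show ?thesis using pd_decomp3[OF assms] by simp
  qed
qed

lemma pd_div:
  assumes "poly_deg m p" "\<And>x. x$i = 0 \<Longrightarrow> p x = 0"
  shows "\<exists>q. poly_deg (m-1) q \<and> (\<forall>x. p x = x$i * q x)"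
proof -
  obtain q where q: "poly_deg (m-1) q" "\<And>x. p x = p (upd i x) + x$i * q x"
    using pd_decomp[OF assms(1), of i] by blast
  have z: "p (upd i x) = 0" for x by (rule assms(2)) simp
  have "p x = x$i * q x" for x using q(2)[of x] z[of x] by simp
  then show ?thesis using q(1) by blast
qed


lemma poly_if0: "poly (if P then a else 0) t = (if P then poly a t else 0)" by simp

lemma pd_identity:
  assumes "poly_deg m p" "open U" "x0 \<in> U" "\<And>x. x \<in> U \<Longrightarrow> p x = 0"
  shows "p y = 0"
proof -
  obtain c where c: "\<And>x. p x = (\<Sum>a\<le>nat m. \<Sum>b\<le>nat m. \<Sum>d\<le>nat m.
              if int (a + b + d) \<le> m then c a b d * (x$1)^a * (x$2)^b * (x$3)^d else 0)"
    using assms(1) unfolding poly_deg_def by blast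
  define h where "h = y - x0"
  define P where "P = (\<Sum>a\<le>nat m. \<Sum>b\<le>nat m. \<Sum>d\<le>nat m.
              if int (a + b + d) \<le> m then smult (c a b d) ([:x0$1, h$1:]^a * [:x0$2, h$2:]^b * [:x0$3, h$3:]^d) else 0)"
  have ev: "poly P t = p (x0 + t *\<^sub>R h)" for t
    unfolding P_def c poly_sum poly_if0
    by (intro sum.cong refl) (simp add: poly_mult poly_power algebra_simps)
  show ?thesis
  proof (cases "h = 0")
    case True then show ?thesis using assms(3,4) by (simp add: h_def)
  next
    case False
    obtain e where e: "e > 0" "ball x0 e \<subseteq> U" using assms(2,3) open_contains_ball by blast
    define \<delta> where "\<delta> = e / norm h"
    have dpos: "\<delta> > 0" using e False by (simp add: \<delta>_def)
    have "{-\<delta><..<\<delta>} \<subseteq> {t. poly P t = 0}"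
    proof
      fix t assume t: "t \<in> {-\<delta><..<\<delta>}"
      have "norm (t *\<^sub>R h) < e"
      proof -
        have "- e < t * norm h \<and> t * norm h < e"
          using t False e(1) by (simp add: \<delta>_def field_simps)
        then have "\<bar>t\<bar> * norm h < e" by (cases "t \<ge> 0") (auto simp: abs_if)
        then show ?thesis by simp
      qed
      then have "x0 + t *\<^sub>R h \<in> U" using e(2) by (auto simp: dist_norm)
      then show "t \<in> {t. poly P t = 0}" using ev assms(4) by simp
    qed
    moreover have "infinite {-\<delta><..<\<delta>}" using dpos by simp
    ultimately have "infinite {t. poly P t = 0}" using finite_subset by blast
    then have "P = 0" using poly_roots_finite by blast
    then show ?thesis using ev[of 1] by (simp add: h_def)
  qed
qed


lemma L_cancel:
  fixes f g :: "real^3 \<Rightarrow> real"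
  assumes "continuous_on UNIV f" "continuous_on UNIV g" "\<And>x. x$i * f x = x$i * g x"
  shows "f x = g x"
proof -
  have "(\<lambda>x. f x - g x) x = 0"
    by (rule zero_by_cont[where j=i]) (use assms in \<open>auto intro!: continuous_intros\<close>)
  then show ?thesis by simp
qed

lemma L_vanish:
  fixes f :: "real^3 \<Rightarrow> real" and i j :: 3
  assumes "continuous_on UNIV f" "\<And>x. x$i = 0 \<Longrightarrow> x$j * f x = 0" "i \<noteq> j" "x$i = 0"
  shows "f x = 0"
proof (rule zero_by_cont[where j=j, OF assms(1)])
  fix y :: "real^3" assume y: "y$j \<noteq> 0" "\<forall>l. l \<noteq> j \<longrightarrow> y$l = x$l"
  then have "y$i = 0" using assms(3,4) by auto
  then show "f y = 0" using assms(2)[of y] y(1) by simp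
qed

lemma L_parallel:
  assumes p: "poly_deg n f1" "poly_deg n f2" "poly_deg n f3"
    and e1: "\<And>x. f1 x * x$2 = x$1 * f2 x" and e2: "\<And>x. f3 x * x$1 = x$3 * f1 x"
  shows "\<exists>a. poly_deg (n-1) a \<and> (\<forall>x. f1 x = a x * x$1 \<and> f2 x = a x * x$2 \<and> f3 x = a x * x$3)"
proof -
  have c: "continuous_on UNIV f1" "continuous_on UNIV f2" "continuous_on UNIV f3"
    using p by (auto intro: pd_continuous)
  have "f1 x = 0" if "x$1 = 0" for x
    by (rule L_vanish[where i=1 and j=2, OF c(1) _ _ that]) (use e1 in \<open>auto simp: mult.commute\<close>)
  then obtain a where a: "poly_deg (n-1) a" "\<And>x. f1 x = x$1 * a x"
    using pd_div[OF p(1), of 1] by blast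
  have ca: "continuous_on UNIV a" using a(1) by (rule pd_continuous)
  have "f2 x = a x * x$2" for x
  proof (rule L_cancel[where i=1])
    show "x$1 * f2 x = x$1 * (a x * x$2)" for x using e1[of x] a(2)[of x] by (metis mult.commute mult.left_commute)
  qed (use c ca in \<open>auto intro!: continuous_intros\<close>)
  moreover have "f3 x = a x * x$3" for x
  proof (rule L_cancel[where i=1])
    show "x$1 * f3 x = x$1 * (a x * x$3)" for x using e2[of x] a(2)[of x] by (simp add: algebra_simps)
  qed (use c ca in \<open>auto intro!: continuous_intros\<close>)
  ultimately show ?thesis using a by (auto simp: mult.commute)
qed

lemma L_2D:
  assumes p: "poly_deg n f" "poly_deg n g"
    and e: "\<And>x. f x * x$1 + g x * x$2 = 0"
  shows "\<exists>h. poly_deg (n-1) h \<and> (\<forall>x. f x = - h x * x$2 \<and> g x = h x * x$1)"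
proof -
  have c: "continuous_on UNIV f" "continuous_on UNIV g"
    using p by (auto intro: pd_continuous)
  have "g x = 0" if "x$1 = 0" for x
  proof (rule L_vanish[where i=1 and j=2, OF c(2) _ _ that])
    show "x$2 * g x = 0" if "x$1 = 0" for x using e[of x] that by (simp add: mult.commute)
  qed simp
  then obtain h where h: "poly_deg (n-1) h" "\<And>x. g x = x$1 * h x"
    using pd_div[OF p(2), of 1] by blast
  have ch: "continuous_on UNIV h" using h(1) by (rule pd_continuous)
  have "f x = - h x * x$2" for x
  proof (rule L_cancel[where i=1])
    show "x$1 * f x = x$1 * (- h x * x$2)" for x using e[of x] h(2)[of x] by (simp add: algebra_simps)
  qed (use c ch in \<open>auto intro!: continuous_intros\<close>)
  then show ?thesis using h by (auto simp: mult.commute)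
qed

lemma upd12_3: "upd 1 (upd 2 (upd 3 x)) = 0"
  by (simp add: vec_eq_iff) (metis exhaust_3)

lemma L_koszul:
  assumes p: "poly_deg n u1" "poly_deg n u2" "poly_deg n u3"
    and e: "\<And>x. u1 x * x$1 + u2 x * x$2 + u3 x * x$3 = 0"
  shows "\<exists>w1 w2 w3. poly_deg (n-1) w1 \<and> poly_deg (n-1) w2 \<and> poly_deg (n-1) w3 \<and>
     (\<forall>x. u1 x = w2 x * x$3 - w3 x * x$2 \<and> u2 x = w3 x * x$1 - w1 x * x$3 \<and> u3 x = w1 x * x$2 - w2 x * x$1)"
proof -
  obtain A where A: "poly_deg (n-1) A" "\<And>x. u3 x = u3 (upd 1 x) + x$1 * A x"
    using pd_decomp[OF p(3), of 1] by blast
  have r: "poly_deg n (\<lambda>x. u3 (upd 1 x))" using p(3) by (rule pd_upd)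
  obtain B where B: "poly_deg (n-1) B" "\<And>x. u3 (upd 1 x) = u3 (upd 1 (upd 2 x)) + x$2 * B x"
    using pd_decomp[OF r, of 2] by blast
  have s: "poly_deg n (\<lambda>x. u3 (upd 1 (upd 2 x)))" using r by (rule pd_upd)
  have s0: "u3 (upd 1 (upd 2 x)) = 0" for x
  proof (rule zero_by_cont[where j=3 and f="\<lambda>x. u3 (upd 1 (upd 2 x))"])
    show "continuous_on UNIV (\<lambda>x. u3 (upd 1 (upd 2 x)))" using s by (rule pd_continuous)
    fix y :: "real^3" assume y: "y$3 \<noteq> 0"
    let ?z = "upd 1 (upd 2 y)"
    have "u3 ?z * ?z$3 = 0" using e[of ?z] by simp
    then show "u3 (upd 1 (upd 2 y)) = 0" using y by simp
  qed
  have u3: "u3 x = x$1 * A x + x$2 * B x" for x using A(2)[of x] B(2)[of x] s0[of x] by simp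
  have "poly_deg n (\<lambda>x. x$3 * A x)" using pd_cmult[OF A(1), of 3] by simp
  then have pf: "poly_deg n (\<lambda>x. u1 x + x$3 * A x)" using pd_add[OF p(1)] by blast
  have "poly_deg n (\<lambda>x. x$3 * B x)" using pd_cmult[OF B(1), of 3] by simp
  then have pg: "poly_deg n (\<lambda>x. u2 x + x$3 * B x)" using pd_add[OF p(2)] by blast
  have "(u1 x + x$3 * A x) * x$1 + (u2 x + x$3 * B x) * x$2 = 0" for x
    using e[of x] u3[of x] by (simp add: algebra_simps)
  then obtain h where h: "poly_deg (n-1) h" "\<And>x. u1 x + x$3 * A x = - h x * x$2 \<and> u2 x + x$3 * B x = h x * x$1"
    using L_2D[OF pf pg] by blast
  have "poly_deg (n-1) (\<lambda>x. - A x)" using A(1) by (rule pd_neg)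
  moreover have "\<forall>x. u1 x = (- A x) * x$3 - h x * x$2 \<and> u2 x = h x * x$1 - B x * x$3 \<and> u3 x = B x * x$2 - (- A x) * x$1"
  proof
    fix x show "u1 x = (- A x) * x$3 - h x * x$2 \<and> u2 x = h x * x$1 - B x * x$3 \<and> u3 x = B x * x$2 - (- A x) * x$1"
      using h(2)[of x] u3[of x] by (simp add: algebra_simps)
  qed
  ultimately show ?thesis using B(1) h(1) by blast
qed

lemma L_decomp0:
  assumes "poly_deg m p"
  shows "\<exists>A B C. poly_deg (m-1) A \<and> poly_deg (m-1) B \<and> poly_deg (m-1) C \<and>
     (\<forall>x. p x = p 0 + x$1 * A x + x$2 * B x + x$3 * C x)"
proof -
  obtain A where A: "poly_deg (m-1) A" "\<And>x. p x = p (upd 1 x) + x$1 * A x"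
    using pd_decomp[OF assms, of 1] by blast
  have r: "poly_deg m (\<lambda>x. p (upd 1 x))" using assms by (rule pd_upd)
  obtain B where B: "poly_deg (m-1) B" "\<And>x. p (upd 1 x) = p (upd 1 (upd 2 x)) + x$2 * B x"
    using pd_decomp[OF r, of 2] by blast
  have s: "poly_deg m (\<lambda>x. p (upd 1 (upd 2 x)))" using r by (rule pd_upd)
  obtain C where C: "poly_deg (m-1) C" "\<And>x. p (upd 1 (upd 2 x)) = p (upd 1 (upd 2 (upd 3 x))) + x$3 * C x"
    using pd_decomp[OF s, of 3] by blast
  have "p x = p 0 + x$1 * A x + x$2 * B x + x$3 * C x" for x
    using A(2)[of x] B(2)[of x] C(2)[of x] upd12_3[of x] by simp
  then show ?thesis using A(1) B(1) C(1) by blast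
qed


lemma div_formula:
  fixes v :: "real^3 \<Rightarrow> real^3" and w :: "3 \<Rightarrow> 3 \<Rightarrow> real^3 \<Rightarrow> real" and c :: "3 \<Rightarrow> real"
  assumes "open \<Omega>" "0 \<in> \<Omega>"
    and v: "\<And>x i. x \<in> \<Omega> \<Longrightarrow> v x $ i = c i + (\<Sum>l\<in>UNIV. x$l * w i l x)"
    and dw: "\<And>i l. w i l differentiable (at 0)"
  shows "div_at v 0 = (\<Sum>i\<in>UNIV. w i i 0)"
proof -
  obtain W where W: "\<And>i l. (w i l has_derivative W i l) (at 0)"
    using dw unfolding differentiable_def by metis
  define g where "g x = (\<Sum>i\<in>UNIV. (c i + (\<Sum>l\<in>UNIV. x$l * w i l x)) *\<^sub>R axis i (1::real))" for x :: "real^3"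
  have gv: "g x = v x" if "x \<in> \<Omega>" for x
    unfolding g_def vec_eq_iff using v[OF that] by (simp add: axis_def if_distrib cong: if_cong)
  have cl: "((\<lambda>x::real^3. x$l) has_derivative (\<lambda>h. h$l)) F" for l F
    by (rule bounded_linear_imp_has_derivative) (rule bounded_linear_vec_nth)
  have d1: "((\<lambda>x. x$l * w i l x) has_derivative (\<lambda>h. h$l * w i l 0)) (at 0)" for i l
    using has_derivative_mult[OF cl W[of i l]] by (rule has_derivative_eq_rhs) simp
  have d2: "((\<lambda>x. c i + (\<Sum>l\<in>UNIV. x$l * w i l x)) has_derivative (\<lambda>h. \<Sum>l\<in>UNIV. h$l * w i l 0)) (at 0)" for i
    using has_derivative_add[OF has_derivative_const has_derivative_sum[OF d1]] by (rule has_derivative_eq_rhs) simp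
  have d3: "((\<lambda>x. (c i + (\<Sum>l\<in>UNIV. x$l * w i l x)) *\<^sub>R axis i (1::real)) has_derivative (\<lambda>h. (\<Sum>l\<in>UNIV. h$l * w i l 0) *\<^sub>R axis i 1)) (at 0)" for i
    using has_derivative_scaleR_left[OF d2] .
  have D: "(g has_derivative (\<lambda>h. \<Sum>i\<in>UNIV. (\<Sum>l\<in>UNIV. h$l * w i l 0) *\<^sub>R axis i 1)) (at 0)"
    unfolding g_def by (rule has_derivative_sum[OF d3])
  then have "(v has_derivative (\<lambda>h. \<Sum>i\<in>UNIV. (\<Sum>l\<in>UNIV. h$l * w i l 0) *\<^sub>R axis i 1)) (at 0)"
    by (rule has_derivative_transform_within_open[OF _ assms(1,2)]) (use gv in auto)
  then have fd: "frechet_derivative v (at 0) = (\<lambda>h. \<Sum>i\<in>UNIV. (\<Sum>l\<in>UNIV. h$l * w i l 0) *\<^sub>R axis i 1)"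
    by (rule frechet_derivative_at[symmetric])
  have ax: "(axis i 1 :: real^3) $ l * r = (if l = i then r else 0)"
     "r * (axis i 1 :: real^3) $ l = (if l = i then r else 0)" for i l r by (simp_all add: axis_def)
  show ?thesis unfolding div_at_def fd by (simp add: ax)
qed


lemma po_intro: "poly_deg m p \<Longrightarrow> (\<And>x. x \<in> \<Omega> \<Longrightarrow> f x = p x) \<Longrightarrow> poly_on \<Omega> m f"
  unfolding poly_on_def by blast

lemma mat_rep:
  assumes "\<tau> \<in> P_mat \<Omega> m"
  obtains P where "\<And>i j. poly_deg m (P i j)" "\<And>i j x. x \<in> \<Omega> \<Longrightarrow> \<tau> x $ i $ j = P i j x"
proof -
  define P where "P i j = (SOME p. poly_deg m p \<and> (\<forall>x\<in>\<Omega>. \<tau> x $ i $ j = p x))" for i j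
  have ex: "\<exists>p. poly_deg m p \<and> (\<forall>x\<in>\<Omega>. \<tau> x $ i $ j = p x)" for i j
    using assms by (auto simp: P_mat_def poly_on_def)
  have "poly_deg m (P i j) \<and> (\<forall>x\<in>\<Omega>. \<tau> x $ i $ j = P i j x)" for i j
    unfolding P_def by (rule someI_ex[OF ex])
  then show ?thesis using that by blast
qed

lemma vec_rep:
  assumes "v \<in> P_vec \<Omega> m"
  obtains V where "\<And>i. poly_deg m (V i)" "\<And>i x. x \<in> \<Omega> \<Longrightarrow> v x $ i = V i x"
proof -
  define V where "V i = (SOME p. poly_deg m p \<and> (\<forall>x\<in>\<Omega>. v x $ i = p x))" for i
  have ex: "\<exists>p. poly_deg m p \<and> (\<forall>x\<in>\<Omega>. v x $ i = p x)" for i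
    using assms by (auto simp: P_vec_def poly_on_def)
  have "poly_deg m (V i) \<and> (\<forall>x\<in>\<Omega>. v x $ i = V i x)" for i
    unfolding V_def by (rule someI_ex[OF ex])
  then show ?thesis using that by blast
qed

lemma row_eq: "(\<forall>j. \<tau> x $ i $ j = P i j x) \<Longrightarrow> \<tau> x $ i = (\<chi> j. P i j x)"
  by (simp add: vec_eq_iff)

lemma cross_poly:
  assumes "\<And>j. poly_deg m (P j)"
  shows "poly_deg (m+1) (\<lambda>x. cross3 (\<chi> j. P j x) x $ l)"
proof -
  have "l = 1 \<or> l = 2 \<or> l = 3" by (rule exhaust_3)
  moreover have "poly_deg (m+1) (\<lambda>x. x$i * P j x)" for i j by (rule pd_cmult[OF assms])
  moreover have "poly_deg (m+1) (\<lambda>x. P j x * x$i)" for i j using pd_cmult[OF assms] by (simp add: mult.commute)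
  ultimately show ?thesis
    by (auto simp: cross_components intro!: pd_diff)
qed

lemma C1:
  assumes "q \<in> P_scal \<Omega> (int k - 2)"
  shows "map_xxT q \<in> P_sym \<Omega> (int k)"
proof -
  obtain p where p: "poly_deg (int k - 2) p" "\<And>x. x \<in> \<Omega> \<Longrightarrow> q x = p x"
    using assms unfolding P_scal_def poly_on_def by blast
  have "poly_deg (int k - 2 + 1 + 1) (\<lambda>x. x$i * (x$j * p x))" for i j
    by (intro pd_cmult p(1))
  then have "poly_on \<Omega> (int k) (\<lambda>x. map_xxT q x $ i $ j)" for i j
    by (intro po_intro[where p="\<lambda>x. x$i * (x$j * p x)"]) (auto simp: map_xxT_def p(2))
  moreover have "transpose (map_xxT q x) = map_xxT q x" for x
    by (simp add: map_xxT_def transpose_def vec_eq_iff mult.commute)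
  ultimately show ?thesis by (simp add: P_sym_def P_mat_def)
qed

lemma C2:
  assumes "\<tau> \<in> P_sym \<Omega> (int k)"
  shows "map_cross \<tau> \<in> P_tf \<Omega> (int k + 1)"
proof -
  obtain P where P: "\<And>i j. poly_deg (int k) (P i j)" "\<And>i j x. x \<in> \<Omega> \<Longrightarrow> \<tau> x $ i $ j = P i j x"
  proof -
    have "\<tau> \<in> P_mat \<Omega> (int k)" using assms by (simp add: P_sym_def)
    then show ?thesis using that by (rule mat_rep)
  qed
  have "poly_on \<Omega> (int k + 1) (\<lambda>x. map_cross \<tau> x $ i $ j)" for i j
  proof (rule po_intro[OF cross_poly[OF P(1)]])
    fix x assume "x \<in> \<Omega>"
    then have "\<tau> x $ i = (\<chi> j. P i j x)" using P(2) by (simp add: vec_eq_iff)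
    then show "map_cross \<tau> x $ i $ j = cross3 (\<chi> j. P i j x) x $ j"
      by (simp add: map_cross_def)
  qed
  moreover have "trace (map_cross \<tau> x) = 0" if "x \<in> \<Omega>" for x
  proof -
    have t: "transpose (\<tau> x) = \<tau> x" using assms that unfolding P_sym_def by blast
    have s: "\<tau> x $ i $ j = \<tau> x $ j $ i" for i j
      using arg_cong[OF t, of "\<lambda>A. A $ i $ j"] by (simp add: transpose_def)
    show ?thesis
      unfolding map_cross_def trace_def using s[of 1 2] s[of 1 3] s[of 2 3]
      by (simp add: sum_3 cross_components algebra_simps)
  qed
  ultimately show ?thesis by (simp add: P_tf_def P_mat_def)
qed

lemma C3:
  assumes "\<tau> \<in> P_tf \<Omega> (int k + 1)"
  shows "map_x \<tau> \<in> P_vec \<Omega> (int k + 2)"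
proof -
  obtain P where P: "\<And>i j. poly_deg (int k + 1) (P i j)" "\<And>i j x. x \<in> \<Omega> \<Longrightarrow> \<tau> x $ i $ j = P i j x"
  proof -
    have "\<tau> \<in> P_mat \<Omega> (int k + 1)" using assms by (simp add: P_tf_def)
    then show ?thesis using that by (rule mat_rep)
  qed
  have "poly_deg (int k + 1 + 1) (\<lambda>x. \<Sum>j\<in>UNIV. x$j * P i j x)" for i
    by (intro pd_sum pd_cmult P(1)) simp
  then have "poly_on \<Omega> (int k + 2) (\<lambda>x. map_x \<tau> x $ i)" for i
    by (intro po_intro[where p="\<lambda>x. \<Sum>j\<in>UNIV. x$j * P i j x"])
       (auto simp: map_x_def matrix_vector_mult_def P(2) mult.commute add.assoc)
  then show ?thesis by (simp add: P_vec_def)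
qed

lemma C4: "pi_RT v \<in> RT"
  unfolding pi_RT_def RT_def by (auto simp: fun_eq_iff add.commute)

lemma C5: "map_cross (map_xxT q) x = 0"
proof -
  have "map_xxT q x $ i = (q x * x$i) *\<^sub>R x" for i by (simp add: map_xxT_def vec_eq_iff)
  then have "cross3 (map_xxT q x $ i) x = 0" for i by (simp only: cross_mult_left cross_refl scaleR_zero_right)
  then show ?thesis by (simp add: map_cross_def vec_eq_iff)
qed

lemma C6: "map_x (map_cross \<tau>) x = 0"
proof -
  have "(\<Sum>j\<in>UNIV. cross3 a x $ j * x $ j) = 0" for a :: "real^3"
    using dot_cross_self(3)[of a x] by (simp add: inner_vec_def)
  then show ?thesis by (simp add: map_x_def map_cross_def matrix_vector_mult_def vec_eq_iff)
qed


lemma C7: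
  assumes "open \<Omega>" "0 \<in> \<Omega>" "\<tau> \<in> P_tf \<Omega> (int k + 1)" "x \<in> \<Omega>"
  shows "pi_RT (map_x \<tau>) x = 0"
proof -
  have m: "\<tau> \<in> P_mat \<Omega> (int k + 1)" using assms by (simp add: P_tf_def)
  obtain P where P: "\<And>i j. poly_deg (int k + 1) (P i j)" "\<And>i j x. x \<in> \<Omega> \<Longrightarrow> \<tau> x $ i $ j = P i j x"
    using mat_rep[OF m] by blast
  have "div_at (map_x \<tau>) 0 = (\<Sum>i\<in>UNIV. P i i 0)"
  proof (rule div_formula[OF assms(1,2), where c="\<lambda>i. 0" and w=P])
    show "map_x \<tau> y $ i = 0 + (\<Sum>l\<in>UNIV. y$l * P i l y)" if "y \<in> \<Omega>" for y i
      using P(2)[OF that] by (simp add: map_x_def matrix_vector_mult_def mult.commute)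
    show "P i l differentiable (at 0)" for i l by (rule pd_differentiable[OF P(1)])
  qed
  also have "\<dots> = trace (\<tau> 0)" using P(2)[OF assms(2)] by (simp add: trace_def)
  also have "\<dots> = 0" using assms(2,3) by (simp add: P_tf_def)
  finally show ?thesis by (simp add: pi_RT_def map_x_def)
qed

lemma C8:
  assumes "open \<Omega>" "0 \<in> \<Omega>" "q \<in> P_scal \<Omega> (int k - 2)" "\<forall>x\<in>\<Omega>. map_xxT q x = 0" "x \<in> \<Omega>"
  shows "q x = 0"
proof -
  obtain p where p: "poly_deg (int k - 2) p" "\<And>x. x \<in> \<Omega> \<Longrightarrow> q x = p x"
    using assms unfolding P_scal_def poly_on_def by blast
  have r: "poly_deg (int k - 2 + 1 + 1) (\<lambda>x. x$1 * (x$1 * p x))" by (intro pd_cmult p(1))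
  have hx: "x$1 * (x$1 * p x) = 0" for x
  proof (rule pd_identity[OF r assms(1,2)])
    fix y assume "y \<in> \<Omega>"
    then have "map_xxT q y $ 1 $ 1 = 0" using assms(4) by simp
    then show "y$1 * (y$1 * p y) = 0" using p(2)[OF \<open>y \<in> \<Omega>\<close>] by (simp add: map_xxT_def algebra_simps)
  qed
  have "p x = 0"
  proof (rule zero_by_cont[where j=1 and f=p and x=x, OF pd_continuous[OF p(1)]])
    fix y :: "real^3" assume "y$1 \<noteq> 0" then show "p y = 0" using hx[of y] by simp
  qed
  then show ?thesis using p(2)[OF assms(5)] by simp
qed

lemma C12:
  assumes "open \<Omega>" "0 \<in> \<Omega>" "f \<in> RT"
  shows "\<exists>v\<in>P_vec \<Omega> (int k + 2). \<forall>x\<in>\<Omega>. pi_RT v x = f x"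
proof -
  obtain a b where f: "f = (\<lambda>x. a *\<^sub>R x + b)" using assms(3) unfolding RT_def by blast
  have "poly_deg (int k + 2) (\<lambda>x. a * x$i + b$i)" for i
    by (intro pd_add pd_scale pd_coord pd_const) auto
  then have fv: "f \<in> P_vec \<Omega> (int k + 2)" unfolding P_vec_def f
    by (auto intro!: po_intro)
  define w where "w i l x = (if l = i then a else 0)" for i l :: 3 and x :: "real^3"
  have "div_at f 0 = (\<Sum>i\<in>UNIV. w i i 0)"
  proof (rule div_formula[OF assms(1,2), where c="\<lambda>i. b$i" and w=w])
    show "f y $ i = b$i + (\<Sum>l\<in>UNIV. y$l * w i l y)" for y i
    proof -
      have "y$l * w i l y = (if l = i then a * y$i else 0)" for l by (simp add: w_def)
      then show ?thesis by (simp add: f)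
    qed
    show "w i l differentiable (at 0)" for i l unfolding w_def by simp
  qed
  moreover have "(\<Sum>i\<in>UNIV. w i i 0) = 3 * a" by (simp add: w_def sum_3)
  ultimately have "div_at f 0 = 3 * a" by simp
  then have "pi_RT f x = f x" for x by (simp add: pi_RT_def f)
  then show ?thesis using fv by blast
qed


lemma pd_multc: "poly_deg m p \<Longrightarrow> poly_deg (m + 1) (\<lambda>x. p x * x$i)"
  using pd_cmult[of m p i] by (simp add: mult.commute)

lemma sym_entries:
  assumes "\<tau> \<in> P_sym \<Omega> m" "x \<in> \<Omega>"
  shows "\<tau> x $ i $ j = \<tau> x $ j $ i"
proof -
  have t: "transpose (\<tau> x) = \<tau> x" using assms unfolding P_sym_def by blast
  show ?thesis using arg_cong[OF t, of "\<lambda>A. A $ i $ j"] by (simp add: transpose_def)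
qed

lemma C9:
  assumes "open \<Omega>" "0 \<in> \<Omega>" "\<tau> \<in> P_sym \<Omega> (int k)" "\<forall>x\<in>\<Omega>. map_cross \<tau> x = 0"
  shows "\<exists>q\<in>P_scal \<Omega> (int k - 2). \<forall>x\<in>\<Omega>. \<tau> x = map_xxT q x"
proof -
  have m: "\<tau> \<in> P_mat \<Omega> (int k)" using assms(3) by (simp add: P_sym_def)
  obtain P where P: "\<And>i j. poly_deg (int k) (P i j)" "\<And>i j x. x \<in> \<Omega> \<Longrightarrow> \<tau> x $ i $ j = P i j x"
    using mat_rep[OF m] by blast
  have sym: "P i j y = P j i y" for i j y
  proof -
    have "P i j y - P j i y = 0"
    proof (rule pd_identity[where p="\<lambda>x. P i j x - P j i x", OF pd_diff[OF P(1) P(1)] assms(1,2)])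
      fix x assume x: "x \<in> \<Omega>"
      show "P i j x - P j i x = 0" using sym_entries[OF assms(3) x, of i j] P(2)[OF x] by simp
    qed
    then show ?thesis by simp
  qed
  have rowO: "\<tau> x $ i = (\<chi> j. P i j x)" if "x \<in> \<Omega>" for i x using P(2)[OF that] by (simp add: vec_eq_iff)
  have crO: "cross3 (\<chi> j. P i j x) x = 0" if "x \<in> \<Omega>" for i x
  proof -
    have "map_cross \<tau> x $ i = 0" using assms(4) that by simp
    then have "cross3 (\<tau> x $ i) x = 0" by (simp add: map_cross_def)
    then show ?thesis using rowO[OF that, of i] by simp
  qed
  have e1: "P i 1 y * y$2 - y$1 * P i 2 y = 0" for i y
  proof (rule pd_identity[where p="\<lambda>x. P i 1 x * x$2 - x$1 * P i 2 x", OF _ assms(1,2)])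
    show "poly_deg (int k + 1) (\<lambda>x. P i 1 x * x$2 - x$1 * P i 2 x)"
      by (intro pd_diff pd_multc pd_cmult P(1))
    fix x assume x: "x \<in> \<Omega>"
    show "P i 1 x * x$2 - x$1 * P i 2 x = 0" using arg_cong[OF crO[OF x, of i], of "\<lambda>v. v$3"]
      by (simp add: cross_components)
  qed
  have e2: "P i 3 y * y$1 - y$3 * P i 1 y = 0" for i y
  proof (rule pd_identity[where p="\<lambda>x. P i 3 x * x$1 - x$3 * P i 1 x", OF _ assms(1,2)])
    show "poly_deg (int k + 1) (\<lambda>x. P i 3 x * x$1 - x$3 * P i 1 x)"
      by (intro pd_diff pd_multc pd_cmult P(1))
    fix x assume x: "x \<in> \<Omega>"
    show "P i 3 x * x$1 - x$3 * P i 1 x = 0" using arg_cong[OF crO[OF x, of i], of "\<lambda>v. v$2"]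
      by (simp add: cross_components)
  qed
  have "\<forall>i. \<exists>a. poly_deg (int k - 1) a \<and> (\<forall>x. P i 1 x = a x * x$1 \<and> P i 2 x = a x * x$2 \<and> P i 3 x = a x * x$3)"
  proof
    fix i
    show "\<exists>a. poly_deg (int k - 1) a \<and> (\<forall>x. P i 1 x = a x * x$1 \<and> P i 2 x = a x * x$2 \<and> P i 3 x = a x * x$3)"
      by (rule L_parallel[OF P(1) P(1) P(1)]) (use e1[of i] e2[of i] in \<open>simp_all add: algebra_simps\<close>)
  qed
  then obtain a where a: "\<And>i. poly_deg (int k - 1) (a i)"
    "\<And>i x. P i 1 x = a i x * x$1" "\<And>i x. P i 2 x = a i x * x$2" "\<And>i x. P i 3 x = a i x * x$3"
    by metis
  have aP: "P i j x = a i x * x$j" for i j x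
    using exhaust_3[of j] a(2,3,4) by auto
  have ca: "continuous_on UNIV (a i)" for i by (rule pd_continuous[OF a(1)])
  have "a 1 x = 0" if "x$1 = 0" for x
  proof (rule L_vanish[where i=1 and j=2, OF ca _ _ that])
    fix y :: "real^3" assume "y$1 = 0"
    then show "y$2 * a 1 y = 0" using sym[of 1 2 y] aP[of 1 2 y] aP[of 2 1 y] by (simp add: mult.commute)
  qed simp
  then obtain q where q: "poly_deg (int k - 1 - 1) q" "\<And>x. a 1 x = x$1 * q x"
    using pd_div[OF a(1), of 1] by blast
  have cq: "continuous_on UNIV q" by (rule pd_continuous[OF q(1)])
  have aq: "a i x = q x * x$i" for i x
  proof -
    have "a i x = q x * x$i" if "i \<noteq> 1" for i
    proof (rule L_cancel[where i=1 and f="a i" and g="\<lambda>x. q x * x$i"])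
      show "x$1 * a i x = x$1 * (q x * x$i)" for x
      proof -
        have "x$1 * a i x = P i 1 x" using aP[of i 1 x] by (simp add: mult.commute)
        also have "\<dots> = P 1 i x" by (rule sym)
        also have "\<dots> = x$1 * (q x * x$i)" using aP[of 1 i x] q(2)[of x] by simp
        finally show ?thesis .
      qed
    qed (use ca cq in \<open>auto intro!: continuous_intros\<close>)
    moreover have "a 1 x = q x * x$1" using q(2)[of x] by (simp add: mult.commute)
    ultimately show ?thesis by (cases "i = 1") auto
  qed
  have "q \<in> P_scal \<Omega> (int k - 2)"
    unfolding P_scal_def using q(1) by (auto intro!: po_intro[where p=q])
  moreover have "\<tau> x = map_xxT q x" if "x \<in> \<Omega>" for x
    using P(2)[OF that] by (simp add: vec_eq_iff map_xxT_def aP aq algebra_simps)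
  ultimately show ?thesis by blast
qed


lemma C10:
  assumes "open \<Omega>" "0 \<in> \<Omega>" "\<tau> \<in> P_tf \<Omega> (int k + 1)" "\<forall>x\<in>\<Omega>. map_x \<tau> x = 0"
  shows "\<exists>\<sigma>\<in>P_sym \<Omega> (int k). \<forall>x\<in>\<Omega>. \<tau> x = map_cross \<sigma> x"
proof -
  have m: "\<tau> \<in> P_mat \<Omega> (int k + 1)" using assms(3) by (simp add: P_tf_def)
  obtain P where P: "\<And>i j. poly_deg (int k + 1) (P i j)" "\<And>i j x. x \<in> \<Omega> \<Longrightarrow> \<tau> x $ i $ j = P i j x"
    using mat_rep[OF m] by blast
  have tr: "P 1 1 y + P 2 2 y + P 3 3 y = 0" for y
  proof (rule pd_identity[where p="\<lambda>x. P 1 1 x + P 2 2 x + P 3 3 x", OF _ assms(1,2)])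
    show "poly_deg (int k + 1) (\<lambda>x. P 1 1 x + P 2 2 x + P 3 3 x)" by (intro pd_add P(1))
    fix x assume x: "x \<in> \<Omega>"
    then have "trace (\<tau> x) = 0" using assms(3) by (simp add: P_tf_def)
    then show "P 1 1 x + P 2 2 x + P 3 3 x = 0" using P(2)[OF x] by (simp add: trace_def sum_3)
  qed
  have row: "P i 1 y * y$1 + P i 2 y * y$2 + P i 3 y * y$3 = 0" for i y
  proof (rule pd_identity[where p="\<lambda>x. P i 1 x * x$1 + P i 2 x * x$2 + P i 3 x * x$3", OF _ assms(1,2)])
    show "poly_deg (int k + 1 + 1) (\<lambda>x. P i 1 x * x$1 + P i 2 x * x$2 + P i 3 x * x$3)"
      by (intro pd_add pd_multc P(1))
    fix x assume x: "x \<in> \<Omega>"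
    then have "map_x \<tau> x $ i = 0" using assms(4) by simp
    then show "P i 1 x * x$1 + P i 2 x * x$2 + P i 3 x * x$3 = 0"
      using P(2)[OF x] by (simp add: map_x_def matrix_vector_mult_def sum_3)
  qed
  have "\<forall>i. \<exists>w::3\<Rightarrow>real^3\<Rightarrow>real. (\<forall>j. poly_deg (int k) (w j)) \<and> (\<forall>x. P i 1 x = w 2 x * x$3 - w 3 x * x$2 \<and>
      P i 2 x = w 3 x * x$1 - w 1 x * x$3 \<and> P i 3 x = w 1 x * x$2 - w 2 x * x$1)"
  proof
    fix i
    obtain w1 w2 w3 where w: "poly_deg (int k + 1 - 1) w1" "poly_deg (int k + 1 - 1) w2" "poly_deg (int k + 1 - 1) w3"
      "\<forall>x. P i 1 x = w2 x * x$3 - w3 x * x$2 \<and> P i 2 x = w3 x * x$1 - w1 x * x$3 \<and> P i 3 x = w1 x * x$2 - w2 x * x$1"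
      using L_koszul[OF P(1) P(1) P(1) row] by blast
    define w where "w j = (if j = 1 then w1 else if j = 2 then w2 else w3)" for j :: 3
    have "poly_deg (int k) (w j)" for j using w(1-3) by (simp add: w_def)
    moreover have "\<forall>x. P i 1 x = w 2 x * x$3 - w 3 x * x$2 \<and>
      P i 2 x = w 3 x * x$1 - w 1 x * x$3 \<and> P i 3 x = w 1 x * x$2 - w 2 x * x$1"
      using w(4) by (simp add: w_def)
    ultimately show "\<exists>w::3\<Rightarrow>real^3\<Rightarrow>real. (\<forall>j. poly_deg (int k) (w j)) \<and> (\<forall>x. P i 1 x = w 2 x * x$3 - w 3 x * x$2 \<and>
      P i 2 x = w 3 x * x$1 - w 1 x * x$3 \<and> P i 3 x = w 1 x * x$2 - w 2 x * x$1)" by blast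
  qed
  from choice[OF this] obtain W :: "3 \<Rightarrow> 3 \<Rightarrow> real^3 \<Rightarrow> real" where W0: "\<forall>i. (\<forall>j. poly_deg (int k) (W i j)) \<and> (\<forall>x. P i 1 x = W i 2 x * x$3 - W i 3 x * x$2 \<and>
      P i 2 x = W i 3 x * x$1 - W i 1 x * x$3 \<and> P i 3 x = W i 1 x * x$2 - W i 2 x * x$1)"
    by blast
  have W: "\<And>i j. poly_deg (int k) (W i j)"
     "\<And>i x. P i 1 x = W i 2 x * x$3 - W i 3 x * x$2"
     "\<And>i x. P i 2 x = W i 3 x * x$1 - W i 1 x * x$3"
     "\<And>i x. P i 3 x = W i 1 x * x$2 - W i 2 x * x$1"
    using W0 by simp_all
  have z: "(W 2 3 x - W 3 2 x) * x$1 + (W 3 1 x - W 1 3 x) * x$2 + (W 1 2 x - W 2 1 x) * x$3 = 0" for x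
    using tr[of x] W(2)[of 1 x] W(3)[of 2 x] W(4)[of 3 x] by (simp add: algebra_simps)
  obtain g1 g2 g3 where g: "poly_deg (int k - 1) g1" "poly_deg (int k - 1) g2" "poly_deg (int k - 1) g3"
    "\<forall>x. W 2 3 x - W 3 2 x = g2 x * x$3 - g3 x * x$2 \<and> W 3 1 x - W 1 3 x = g3 x * x$1 - g1 x * x$3
       \<and> W 1 2 x - W 2 1 x = g1 x * x$2 - g2 x * x$1"
    using L_koszul[OF pd_diff[OF W(1) W(1)] pd_diff[OF W(1) W(1)] pd_diff[OF W(1) W(1)] z] by blast
  define G where "G i = (if i = 1 then g1 else if i = 2 then g2 else g3)" for i :: 3
  have pG: "poly_deg (int k - 1) (G i)" for i using g(1-3) by (simp add: G_def)
  define S where "S i j x = W i j x - G i x * x$j" for i j :: 3 and x :: "real^3"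
  have pS: "poly_deg (int k) (S i j)" for i j
  proof -
    have "poly_deg (int k) (\<lambda>x. G i x * x$j)" using pd_multc[OF pG, of i j] by simp
    then show ?thesis unfolding S_def using pd_diff[OF W(1)] by blast
  qed
  have Ssym: "S i j x = S j i x" for i j x
  proof -
    have e: "i = 1 \<or> i = 2 \<or> i = 3" "j = 1 \<or> j = 2 \<or> j = 3" by (rule exhaust_3)+
    show ?thesis using e g(4) unfolding S_def G_def by (auto simp: algebra_simps)
  qed
  have Scr: "cross3 (\<chi> j. S i j x) x $ l = P i l x" for i l x
  proof -
    have e: "l = 1 \<or> l = 2 \<or> l = 3" by (rule exhaust_3)
    show ?thesis using e W(2-4)[of i x] unfolding S_def by (auto simp: cross_components algebra_simps)
  qed
  define \<sigma> where "\<sigma> x = (\<chi> i j. S i j x)" for x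
  have "\<sigma> \<in> P_sym \<Omega> (int k)"
    unfolding P_sym_def P_mat_def
  proof (intro CollectI conjI allI ballI)
    show "poly_on \<Omega> (int k) (\<lambda>x. \<sigma> x $ i $ j)" for i j
      by (rule po_intro[OF pS]) (simp add: \<sigma>_def)
    show "transpose (\<sigma> x) = \<sigma> x" for x
      by (simp add: \<sigma>_def transpose_def vec_eq_iff Ssym)
  qed
  moreover have "\<tau> x = map_cross \<sigma> x" if "x \<in> \<Omega>" for x
  proof -
    have r: "\<sigma> x $ i = (\<chi> j. S i j x)" for i by (simp add: \<sigma>_def)
    have "\<tau> x $ i $ l = map_cross \<sigma> x $ i $ l" for i l
      by (simp only: map_cross_def vec_lambda_beta r Scr P(2)[OF that])
    then show ?thesis by (simp add: vec_eq_iff)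
  qed
  ultimately show ?thesis by blast
qed


lemma C11:
  assumes "open \<Omega>" "0 \<in> \<Omega>" "v \<in> P_vec \<Omega> (int k + 2)" "\<forall>x\<in>\<Omega>. pi_RT v x = 0"
  shows "\<exists>\<tau>\<in>P_tf \<Omega> (int k + 1). \<forall>x\<in>\<Omega>. v x = map_x \<tau> x"
proof -
  obtain V where V: "\<And>i. poly_deg (int k + 2) (V i)" "\<And>i x. x \<in> \<Omega> \<Longrightarrow> v x $ i = V i x"
    using vec_rep[OF assms(3)] by blast
  have "pi_RT v 0 = 0" using assms(2,4) by blast
  then have v0: "v 0 = 0" by (simp add: pi_RT_def)
  obtain e where e: "e > 0" "ball 0 e \<subseteq> \<Omega>" using assms(1,2) open_contains_ball by blast
  define x1 :: "real^3" where "x1 = (e/2) *\<^sub>R axis 1 1"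
  have x1: "x1 \<in> \<Omega>" "x1 \<noteq> 0"
    using e by (auto simp: x1_def intro!: subsetD[OF e(2)])
  have "pi_RT v x1 = 0" using assms(4) x1(1) by blast
  then have "((1/3) * div_at v 0) *\<^sub>R x1 = 0" by (simp add: pi_RT_def v0)
  then have div0: "div_at v 0 = 0" using x1(2) by simp
  have "\<forall>i. \<exists>a::3\<Rightarrow>real^3\<Rightarrow>real. (\<forall>l. poly_deg (int k + 1) (a l)) \<and>
     (\<forall>x. V i x = V i 0 + x$1 * a 1 x + x$2 * a 2 x + x$3 * a 3 x)"
  proof
    fix i
    obtain a1 a2 a3 where a: "poly_deg (int k + 2 - 1) a1" "poly_deg (int k + 2 - 1) a2" "poly_deg (int k + 2 - 1) a3"
      "\<forall>x. V i x = V i 0 + x$1 * a1 x + x$2 * a2 x + x$3 * a3 x"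
      using L_decomp0[OF V(1)] by blast
    define a where "a j = (if j = 1 then a1 else if j = 2 then a2 else a3)" for j :: 3
    have "poly_deg (int k + 1) (a j)" for j using a(1-3) by (simp add: a_def add.commute)
    moreover have "\<forall>x. V i x = V i 0 + x$1 * a 1 x + x$2 * a 2 x + x$3 * a 3 x"
    proof
      fix x
      have "V i x = V i 0 + x$1 * a1 x + x$2 * a2 x + x$3 * a3 x" using a(4) by blast
      then show "V i x = V i 0 + x$1 * a 1 x + x$2 * a 2 x + x$3 * a 3 x" by (simp add: a_def)
    qed
    ultimately show "\<exists>a::3\<Rightarrow>real^3\<Rightarrow>real. (\<forall>l. poly_deg (int k + 1) (a l)) \<and>
     (\<forall>x. V i x = V i 0 + x$1 * a 1 x + x$2 * a 2 x + x$3 * a 3 x)" by blast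
  qed
  from choice[OF this] obtain A :: "3 \<Rightarrow> 3 \<Rightarrow> real^3 \<Rightarrow> real" where A0: "\<forall>i. (\<forall>l. poly_deg (int k + 1) (A i l)) \<and>
     (\<forall>x. V i x = V i 0 + x$1 * A i 1 x + x$2 * A i 2 x + x$3 * A i 3 x)" by blast
  have pA: "poly_deg (int k + 1) (A i l)" for i l using A0 by simp
  have V0: "V i 0 = 0" for i using V(2)[OF assms(2)] v0 by simp
  have vx: "v x $ i = 0 + (\<Sum>l\<in>UNIV. x$l * A i l x)" if "x \<in> \<Omega>" for x i
  proof -
    have "V i x = V i 0 + x$1 * A i 1 x + x$2 * A i 2 x + x$3 * A i 3 x" using A0 by blast
    then show ?thesis using V(2)[OF that, of i] V0[of i] by (simp add: sum_3)
  qed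
  have "div_at v 0 = (\<Sum>i\<in>UNIV. A i i 0)"
    by (rule div_formula[OF assms(1,2), where c="\<lambda>i. 0" and w=A])
       (use vx pd_differentiable[OF pA] in auto)
  then have t0: "A 1 1 0 + A 2 2 0 + A 3 3 0 = 0" using div0 by (simp add: sum_3)
  define t where "t x = A 1 1 x + A 2 2 x + A 3 3 x" for x
  have pt: "poly_deg (int k + 1) t" unfolding t_def by (intro pd_add pA)
  obtain T1 T2 T3 where T: "poly_deg (int k + 1 - 1) T1" "poly_deg (int k + 1 - 1) T2" "poly_deg (int k + 1 - 1) T3"
    "\<forall>x. t x = t 0 + x$1 * T1 x + x$2 * T2 x + x$3 * T3 x"
    using L_decomp0[OF pt] by blast
  have tT: "t x = x$1 * T1 x + x$2 * T2 x + x$3 * T3 x" for x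
  proof -
    have "t x = t 0 + x$1 * T1 x + x$2 * T2 x + x$3 * T3 x" using T(4) by blast
    moreover have "t 0 = 0" using t0 by (simp add: t_def)
    ultimately show ?thesis by simp
  qed
  define N where "N i l x = (if i = 1 then (if l = 1 then T3 x * x$3 else if l = 3 then - (T3 x * x$1) else 0)
       else if i = 2 then (if l = 1 then - (T1 x * x$2) else if l = 2 then T1 x * x$1 else 0)
       else (if l = 2 then - (T2 x * x$3) else if l = 3 then T2 x * x$2 else 0))" for i l :: 3 and x :: "real^3"
  have pT: "poly_deg (int k + 1) (\<lambda>x. T1 x * x$j)" "poly_deg (int k + 1) (\<lambda>x. T2 x * x$j)"
     "poly_deg (int k + 1) (\<lambda>x. T3 x * x$j)" for j
    using pd_multc[OF T(1), of j] pd_multc[OF T(2), of j] pd_multc[OF T(3), of j] by simp_all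
  have pN: "poly_deg (int k + 1) (N i l)" for i l
  proof -
    have e: "i = 1 \<or> i = 2 \<or> i = 3" "l = 1 \<or> l = 2 \<or> l = 3" by (rule exhaust_3)+
    show ?thesis using e unfolding N_def by (auto intro!: pd_neg pT pd_zero)
  qed
  have Nrow: "(\<Sum>l\<in>UNIV. N i l x * x$l) = 0" for i x
  proof -
    have e: "i = 1 \<or> i = 2 \<or> i = 3" by (rule exhaust_3)
    show ?thesis using e unfolding N_def by (auto simp: sum_3 algebra_simps)
  qed
  have Ntr: "N 1 1 x + N 2 2 x + N 3 3 x = t x" for x unfolding N_def tT by (simp add: algebra_simps)
  define \<tau> where "\<tau> x = (\<chi> i l. A i l x - N i l x)" for x
  have "\<tau> \<in> P_tf \<Omega> (int k + 1)"
    unfolding P_tf_def P_mat_def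
  proof (intro CollectI conjI allI ballI)
    show "poly_on \<Omega> (int k + 1) (\<lambda>x. \<tau> x $ i $ j)" for i j
      by (rule po_intro[OF pd_diff[OF pA pN]]) (simp add: \<tau>_def)
    show "trace (\<tau> x) = 0" for x
      using Ntr[of x] by (simp add: \<tau>_def trace_def sum_3 t_def)
  qed
  moreover have "v x = map_x \<tau> x" if "x \<in> \<Omega>" for x
  proof -
    have "v x $ i = map_x \<tau> x $ i" for i
    proof -
      have "map_x \<tau> x $ i = (\<Sum>l\<in>UNIV. (A i l x - N i l x) * x$l)"
        by (simp add: map_x_def matrix_vector_mult_def \<tau>_def)
      also have "\<dots> = (\<Sum>l\<in>UNIV. x$l * A i l x) - (\<Sum>l\<in>UNIV. N i l x * x$l)"
        by (simp add: algebra_simps sum_subtractf)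
      also have "\<dots> = v x $ i" using vx[OF that, of i] Nrow[of i x] by simp
      finally show ?thesis by simp
    qed
    then show ?thesis by (simp add: vec_eq_iff)
  qed
  ultimately show ?thesis by blast
qed


theorem lemma3p3:
  fixes \<Omega> :: "(real^3) set" and k :: nat
  assumes "open \<Omega>" and "connected \<Omega>" and "bounded \<Omega>" and "0 \<in> \<Omega>"
  shows
    \<comment> \<open>well-definedness\<close>
    "(\<forall>q\<in>P_scal \<Omega> (int k - 2). map_xxT q \<in> P_sym \<Omega> (int k))
   \<and> (\<forall>\<tau>\<in>P_sym \<Omega> (int k). map_cross \<tau> \<in> P_tf \<Omega> (int k + 1))
   \<and> (\<forall>\<tau>\<in>P_tf \<Omega> (int k + 1). map_x \<tau> \<in> P_vec \<Omega> (int k + 2))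
   \<and> (\<forall>v\<in>P_vec \<Omega> (int k + 2). pi_RT v \<in> RT)
    \<comment> \<open>complex: composition of consecutive maps vanishes\<close>
   \<and> (\<forall>q\<in>P_scal \<Omega> (int k - 2). \<forall>x\<in>\<Omega>. map_cross (map_xxT q) x = 0)
   \<and> (\<forall>\<tau>\<in>P_sym \<Omega> (int k). \<forall>x\<in>\<Omega>. map_x (map_cross \<tau>) x = 0)
   \<and> (\<forall>\<tau>\<in>P_tf \<Omega> (int k + 1). \<forall>x\<in>\<Omega>. pi_RT (map_x \<tau>) x = 0)
    \<comment> \<open>exactness\<close>
   \<and> (\<forall>q\<in>P_scal \<Omega> (int k - 2). (\<forall>x\<in>\<Omega>. map_xxT q x = 0) \<longrightarrow> (\<forall>x\<in>\<Omega>. q x = 0))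
   \<and> (\<forall>\<tau>\<in>P_sym \<Omega> (int k). (\<forall>x\<in>\<Omega>. map_cross \<tau> x = 0) \<longrightarrow>
        (\<exists>q\<in>P_scal \<Omega> (int k - 2). \<forall>x\<in>\<Omega>. \<tau> x = map_xxT q x))
   \<and> (\<forall>\<tau>\<in>P_tf \<Omega> (int k + 1). (\<forall>x\<in>\<Omega>. map_x \<tau> x = 0) \<longrightarrow>
        (\<exists>\<sigma>\<in>P_sym \<Omega> (int k). \<forall>x\<in>\<Omega>. \<tau> x = map_cross \<sigma> x))
   \<and> (\<forall>v\<in>P_vec \<Omega> (int k + 2). (\<forall>x\<in>\<Omega>. pi_RT v x = 0) \<longrightarrow>
        (\<exists>\<tau>\<in>P_tf \<Omega> (int k + 1). \<forall>x\<in>\<Omega>. v x = map_x \<tau> x))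
   \<and> (\<forall>f\<in>RT. \<exists>v\<in>P_vec \<Omega> (int k + 2). \<forall>x\<in>\<Omega>. pi_RT v x = f x)"
proof -
  have 1: "\<forall>q\<in>P_scal \<Omega> (int k - 2). map_xxT q \<in> P_sym \<Omega> (int k)" using C1 by blast
  have 2: "\<forall>\<tau>\<in>P_sym \<Omega> (int k). map_cross \<tau> \<in> P_tf \<Omega> (int k + 1)" using C2 by blast
  have 3: "\<forall>\<tau>\<in>P_tf \<Omega> (int k + 1). map_x \<tau> \<in> P_vec \<Omega> (int k + 2)" using C3 by blast
  have 4: "\<forall>v\<in>P_vec \<Omega> (int k + 2). pi_RT v \<in> RT" using C4 by blast
  have 5: "\<forall>q\<in>P_scal \<Omega> (int k - 2). \<forall>x\<in>\<Omega>. map_cross (map_xxT q) x = 0" using C5 by blast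
  have 6: "\<forall>\<tau>\<in>P_sym \<Omega> (int k). \<forall>x\<in>\<Omega>. map_x (map_cross \<tau>) x = 0" using C6 by blast
  have 7: "\<forall>\<tau>\<in>P_tf \<Omega> (int k + 1). \<forall>x\<in>\<Omega>. pi_RT (map_x \<tau>) x = 0"
    using C7[OF assms(1,4)] by blast
  have 8: "\<forall>q\<in>P_scal \<Omega> (int k - 2). (\<forall>x\<in>\<Omega>. map_xxT q x = 0) \<longrightarrow> (\<forall>x\<in>\<Omega>. q x = 0)"
    using C8[OF assms(1,4)] by blast
  have 9: "\<forall>\<tau>\<in>P_sym \<Omega> (int k). (\<forall>x\<in>\<Omega>. map_cross \<tau> x = 0) \<longrightarrow>
        (\<exists>q\<in>P_scal \<Omega> (int k - 2). \<forall>x\<in>\<Omega>. \<tau> x = map_xxT q x)"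
    using C9[OF assms(1,4)] by blast
  have 10: "\<forall>\<tau>\<in>P_tf \<Omega> (int k + 1). (\<forall>x\<in>\<Omega>. map_x \<tau> x = 0) \<longrightarrow>
        (\<exists>\<sigma>\<in>P_sym \<Omega> (int k). \<forall>x\<in>\<Omega>. \<tau> x = map_cross \<sigma> x)"
    using C10[OF assms(1,4)] by blast
  have 11: "\<forall>v\<in>P_vec \<Omega> (int k + 2). (\<forall>x\<in>\<Omega>. pi_RT v x = 0) \<longrightarrow>
        (\<exists>\<tau>\<in>P_tf \<Omega> (int k + 1). \<forall>x\<in>\<Omega>. v x = map_x \<tau> x)"
    using C11[OF assms(1,4)] by blast
  have 12: "\<forall>f\<in>RT. \<exists>v\<in>P_vec \<Omega> (int k + 2). \<forall>x\<in>\<Omega>. pi_RT v x = f x"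
    using C12[OF assms(1,4)] by blast
  show ?thesis by (intro conjI 1 2 3 4 5 6 7 8 9 10 11 12)
qed

end
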